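(* Let $(G,t)$ be an infinite biosphere. Then: (1) $\mathrm{CONV}$ is upward generic; (2) $\mathrm{CA}$ is upward generic; (3) $\mathrm{REF}$ is upward generic; (4) $\mathrm{IAP}\cap\mathrm{CONV}\cap\mathrm{CA}\cap\mathrm{REF}$ is upward generic.
   Context: An infinite biosphere is a directed graph $G$ together with a function $t$ assigning a real number $t(v)$ to each vertex, such that: (1) if $v$ is a parent of $w$ (edge from $v$ to $w$) then $t(v)<t(w)$; (2) for every $r\in\mathbb R$ at most finitely many vertices $v$ have $t(v)<r$; (3) every vertex has finitely many children; (4) $G$ is infinite. $v$ is an ancestor of $w$ (and $w$ a descendant of $v$) if there is a directed path $v=v_1,\dots,v_n=w$ with $n>1$. A $G$-subset is a set of vertices. Define the following sets of $G$-subsets: $\mathrm{IAP}$: those $S$ such that no $v\in S$ has both infinitely many descendants in $S$ and infinitely many non-descendants in $S$ (identical ancestor point axiom). $\mathrm{CONV}$: those $S$ such that every $v\in G$ having an ancestor in $S$ and a descendant in $S$ lies in $S$. $\mathrm{CA}$: those $S$ for which there exists $v\in S$ such that every $w\in S$ with $w\neq v$ is a descendant of $v$ (common ancestor property). $\mathrm{REF}$: those $S$ such that every $v\in S$ which has infinitely many descendants in $G$ has infinitely many descendants in $S$ (reflection property). For a nonempty linear order $(X,<)$, an ascending chain of $G$-subsets indexed by $X$ is a family $\{C_\alpha\}_{\alpha\in X}$ with $C_\alpha\subseteq C_\beta$ whenever $\alpha<\beta$. A set $T$ of $G$-subsets is upward generic if for every ascending chain $\{C_\alpha\}_{\alpha\in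 X}$ of nonempty $G$-subsets with each $C_\alpha\in T$, $\bigcup_\alpha C_\alpha\in T$. *)

theory Defs
  imports Complex_Main
begin

text \<open>A directed graph on the vertex type 'v is given by its edge relation E
  (E v w means: v is a parent of w). The vertex set is UNIV.\<close>

definition infinite_biosphere :: "('v \<Rightarrow> 'v \<Rightarrow> bool) \<Rightarrow> ('v \<Rightarrow> real) \<Rightarrow> bool" where
  "infinite_biosphere E t \<longleftrightarrow>
     (\<forall>v w. E v w \<longrightarrow> t v < t w) \<and>
     (\<forall>r::real. finite {v. t v < r}) \<and>
     (\<forall>v. finite {w. E v w}) \<and>
     infinite (UNIV :: 'v set)"

definition descendant :: "('v \<Rightarrow> 'v \<Rightarrow> bool) \<Rightarrow> 'v \<Rightarrow> 'v \<Rightarrow> bool" where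
  "descendant E v w \<longleftrightarrow> E\<^sup>+\<^sup>+ v w"

definition IAP :: "('v \<Rightarrow> 'v \<Rightarrow> bool) \<Rightarrow> 'v set set" where
  "IAP E = {S. \<not> (\<exists>v\<in>S. infinite {w\<in>S. descendant E v w}
                      \<and> infinite {w\<in>S. \<not> descendant E v w})}"

definition CONV :: "('v \<Rightarrow> 'v \<Rightarrow> bool) \<Rightarrow> 'v set set" where
  "CONV E = {S. \<forall>v. (\<exists>a\<in>S. descendant E a v) \<and> (\<exists>d\<in>S. descendant E v d) \<longrightarrow> v \<in> S}"

definition CA :: "('v \<Rightarrow> 'v \<Rightarrow> bool) \<Rightarrow> 'v set set" where
  "CA E = {S. \<exists>v\<in>S. \<forall>w\<in>S. w \<noteq> v \<longrightarrow> descendant E v w}"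

definition REF :: "('v \<Rightarrow> 'v \<Rightarrow> bool) \<Rightarrow> 'v set set" where
  "REF E = {S. \<forall>v\<in>S. infinite {w. descendant E v w} \<longrightarrow> infinite {w\<in>S. descendant E v w}}"

text \<open>Upward genericity, for chains indexed by a (nonempty, as every HOL type is)
  linearly ordered index type 'i. The theorem quantifies over all such 'i.\<close>
definition upward_generic_idx :: "'i::linorder itself \<Rightarrow> 'v set set \<Rightarrow> bool" where
  "upward_generic_idx _ T \<longleftrightarrow>
     (\<forall>C :: 'i \<Rightarrow> 'v set.
        (\<forall>\<alpha> \<beta>. \<alpha> < \<beta> \<longrightarrow> C \<alpha> \<subseteq> C \<beta>) \<longrightarrow>
        (\<forall>\<alpha>. C \<alpha> \<noteq> {} \<and> C \<alpha> \<in> T) \<longrightarrow>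
        (\<Union>\<alpha>. C \<alpha>) \<in> T)"

end

theory Submission
  imports Defs
begin

lemma desc_t:
  assumes "infinite_biosphere E t" "descendant E v w" shows "t v < t w"
proof -
  have e: "\<And>a b. E a b \<Longrightarrow> t a < t b" using assms(1) unfolding infinite_biosphere_def by blast
  have "E\<^sup>+\<^sup>+ v w" using assms(2) unfolding descendant_def .
  then show ?thesis
    by (induction rule: tranclp_induct) (auto dest: e)
qed

lemma desc_trans: "descendant E a b \<Longrightarrow> descendant E b c \<Longrightarrow> descendant E a c"
  unfolding descendant_def by (rule tranclp_trans)

lemma desc_edge: "E a b \<Longrightarrow> b = c \<or> descendant E b c \<Longrightarrow> descendant E a c"
  unfolding descendant_def by (auto intro: tranclp_into_tranclp2)

lemma chain_mono:
  fixes C :: "'i::linorder \<Rightarrow> 'v set"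
  assumes "\<forall>\<alpha> \<beta>. \<alpha> < \<beta> \<longrightarrow> C \<alpha> \<subseteq> C \<beta>" "\<alpha> \<le> \<beta>" shows "C \<alpha> \<subseteq> C \<beta>"
  using assms by (cases "\<alpha> = \<beta>") auto

lemma path_exit:
  assumes "descendant E a w" "a \<in> S" "w \<notin> S"
  shows "\<exists>x y. x \<in> S \<and> y \<notin> S \<and> E x y \<and> (x = a \<or> descendant E a x) \<and> (y = w \<or> descendant E y w)"
proof -
  have "E\<^sup>+\<^sup>+ a w" using assms(1) unfolding descendant_def .
  then show ?thesis using assms(3)
  proof (induction rule: tranclp_induct)
    case (base y)
    then show ?case using assms(2) by blast
  next
    case (step y z)
    show ?case
    proof (cases "y \<in> S")
      case True
      then show ?thesis using step by (auto simp: descendant_def)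
    next
      case False
      then obtain x y' where "x \<in> S" "y' \<notin> S" "E x y'" "x = a \<or> descendant E a x"
        "y' = y \<or> descendant E y' y" using step.IH by blast
      moreover have "descendant E y' z" using calculation(5) step.hyps(2)
        unfolding descendant_def by (auto intro: tranclp.trancl_into_trancl)
      ultimately show ?thesis by blast
    qed
  qed
qed

lemma conv_ug: "upward_generic_idx TYPE('i::linorder) (CONV E)"
  unfolding upward_generic_idx_def
proof (intro allI impI)
  fix C :: "'i \<Rightarrow> _"
  assume ch: "\<forall>\<alpha> \<beta>. \<alpha> < \<beta> \<longrightarrow> C \<alpha> \<subseteq> C \<beta>" and all: "\<forall>\<alpha>. C \<alpha> \<noteq> {} \<and> C \<alpha> \<in> CONV E"
  show "(\<Union>\<alpha>. C \<alpha>) \<in> CONV E"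
    unfolding CONV_def
  proof (intro CollectI allI impI)
    fix v assume "(\<exists>a\<in>\<Union>(range C). descendant E a v) \<and> (\<exists>d\<in>\<Union>(range C). descendant E v d)"
    then obtain a d \<alpha> \<beta> where "a \<in> C \<alpha>" "d \<in> C \<beta>" "descendant E a v" "descendant E v d" by blast
    moreover have "C \<alpha> \<subseteq> C (max \<alpha> \<beta>)" "C \<beta> \<subseteq> C (max \<alpha> \<beta>)"
      using chain_mono[OF ch] by auto
    moreover have "C (max \<alpha> \<beta>) \<in> CONV E" using all by blast
    ultimately have "v \<in> C (max \<alpha> \<beta>)" unfolding CONV_def by blast
    then show "v \<in> \<Union>(range C)" by blast
  qed
qed

lemma ref_ug: "upward_generic_idx TYPE('i::linorder) (REF E)"
  unfolding upward_generic_idx_def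
proof (intro allI impI)
  fix C :: "'i \<Rightarrow> _"
  assume ch: "\<forall>\<alpha> \<beta>. \<alpha> < \<beta> \<longrightarrow> C \<alpha> \<subseteq> C \<beta>" and all: "\<forall>\<alpha>. C \<alpha> \<noteq> {} \<and> C \<alpha> \<in> REF E"
  show "(\<Union>\<alpha>. C \<alpha>) \<in> REF E"
    unfolding REF_def
  proof (intro CollectI ballI impI)
    fix v assume "v \<in> \<Union>(range C)" and inf: "infinite {w. descendant E v w}"
    then obtain \<alpha> where "v \<in> C \<alpha>" by blast
    then have "infinite {w \<in> C \<alpha>. descendant E v w}" using all inf unfolding REF_def by blast
    then show "infinite {w \<in> \<Union>(range C). descendant E v w}"
      by (rule infinite_super[rotated]) blast
  qed
qed

lemma root_stable:
  fixes C :: "'i::linorder \<Rightarrow> 'v set"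
  assumes bio: "infinite_biosphere E t"
    and ch: "\<forall>\<alpha> \<beta>. \<alpha> < \<beta> \<longrightarrow> C \<alpha> \<subseteq> C \<beta>" and all: "\<forall>\<alpha>. C \<alpha> \<in> CA E"
  shows "\<exists>r \<gamma>. \<forall>\<delta>\<ge>\<gamma>. r \<in> C \<delta> \<and> (\<forall>w\<in>C \<delta>. w \<noteq> r \<longrightarrow> descendant E r w)"
proof -
  define rt where "rt \<alpha> = (SOME v. v \<in> C \<alpha> \<and> (\<forall>w\<in>C \<alpha>. w \<noteq> v \<longrightarrow> descendant E v w))" for \<alpha>
  have rt: "rt \<alpha> \<in> C \<alpha> \<and> (\<forall>w\<in>C \<alpha>. w \<noteq> rt \<alpha> \<longrightarrow> descendant E (rt \<alpha>) w)" for \<alpha>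
  proof -
    have "\<exists>v. v \<in> C \<alpha> \<and> (\<forall>w\<in>C \<alpha>. w \<noteq> v \<longrightarrow> descendant E v w)" using all unfolding CA_def by blast
    then show ?thesis unfolding rt_def by (rule someI_ex)
  qed
  define a0 :: 'i where "a0 = undefined"
  define R where "R = range rt \<inter> {x. t x < t (rt a0) + 1}"
  have fin: "finite R" using bio unfolding infinite_biosphere_def R_def by auto
  have ne: "rt a0 \<in> R" unfolding R_def by auto
  define m where "m = Min (t ` R)"
  have "m \<in> t ` R" unfolding m_def using fin ne by (intro Min_in) auto
  then obtain r where rR: "r \<in> R" and tr: "t r = m" by blast
  have minr: "\<And>x. x \<in> R \<Longrightarrow> t r \<le> t x" using fin tr unfolding m_def by auto
  obtain \<gamma> where r\<gamma>: "r = rt \<gamma>" using rR unfolding R_def by auto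
  have "t r \<le> t (rt a0)" using minr ne by auto
  have mina: "t r \<le> t (rt \<delta>)" for \<delta>
  proof (cases "t (rt \<delta>) < t (rt a0) + 1")
    case True then show ?thesis using minr unfolding R_def by auto
  next
    case False then show ?thesis using \<open>t r \<le> t (rt a0)\<close> by auto
  qed
  show ?thesis
  proof (intro exI allI impI)
    fix \<delta> assume "\<gamma> \<le> \<delta>"
    then have "r \<in> C \<delta>" using chain_mono[OF ch] rt r\<gamma> by blast
    moreover have "r = rt \<delta>"
    proof (rule ccontr)
      assume "r \<noteq> rt \<delta>"
      then have "descendant E (rt \<delta>) r" using rt \<open>r \<in> C \<delta>\<close> by blast
      then have "t (rt \<delta>) < t r" using desc_t[OF bio] by blast
      then show False using mina[of \<delta>] by auto
    qed
    ultimately show "r \<in> C \<delta> \<and> (\<forall>w\<in>C \<delta>. w \<noteq> r \<longrightarrow> descendant E r w)" using rt by metis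
  qed
qed

lemma ca_ug:
  assumes bio: "infinite_biosphere E t"
  shows "upward_generic_idx TYPE('i::linorder) (CA E)"
  unfolding upward_generic_idx_def
proof (intro allI impI)
  fix C :: "'i \<Rightarrow> _"
  assume ch: "\<forall>\<alpha> \<beta>. \<alpha> < \<beta> \<longrightarrow> C \<alpha> \<subseteq> C \<beta>" and all: "\<forall>\<alpha>. C \<alpha> \<noteq> {} \<and> C \<alpha> \<in> CA E"
  obtain r \<gamma> where rs: "\<forall>\<delta>\<ge>\<gamma>. r \<in> C \<delta> \<and> (\<forall>w\<in>C \<delta>. w \<noteq> r \<longrightarrow> descendant E r w)"
    using root_stable[OF bio ch] all by blast
  show "(\<Union>\<alpha>. C \<alpha>) \<in> CA E"
    unfolding CA_def
  proof (intro CollectI bexI ballI impI)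
    show "r \<in> \<Union>(range C)" using rs by blast
    fix w assume "w \<in> \<Union>(range C)" "w \<noteq> r"
    then obtain \<beta> where "w \<in> C \<beta>" by blast
    then have "w \<in> C (max \<beta> \<gamma>)" using chain_mono[OF ch, of \<beta> "max \<beta> \<gamma>"] by auto
    moreover have "\<gamma> \<le> max \<beta> \<gamma>" by simp
    ultimately show "descendant E r w" using rs \<open>w \<noteq> r\<close> by blast
  qed
qed

lemma iap_ug:
  assumes bio: "infinite_biosphere E t"
  shows "upward_generic_idx TYPE('i::linorder) (IAP E \<inter> CONV E \<inter> CA E \<inter> REF E)"
  unfolding upward_generic_idx_def
proof (intro allI impI)
  fix C :: "'i \<Rightarrow> _"
  assume ch: "\<forall>\<alpha> \<beta>. \<alpha> < \<beta> \<longrightarrow> C \<alpha> \<subseteq> C \<beta>"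
    and all: "\<forall>\<alpha>. C \<alpha> \<noteq> {} \<and> C \<alpha> \<in> IAP E \<inter> CONV E \<inter> CA E \<inter> REF E"
  have mo: "\<And>\<alpha> \<beta>. \<alpha> \<le> \<beta> \<Longrightarrow> C \<alpha> \<subseteq> C \<beta>" using chain_mono[OF ch] by blast
  have iap: "\<And>\<alpha>. C \<alpha> \<in> IAP E" and conv: "\<And>\<alpha>. C \<alpha> \<in> CONV E"
    and ref: "\<And>\<alpha>. C \<alpha> \<in> REF E" using all by auto
  let ?U = "\<Union>\<alpha>. C \<alpha>"
  have U1: "?U \<in> CONV E" using conv_ug[where 'i='i, of E] ch all unfolding upward_generic_idx_def by blast
  have U2: "?U \<in> CA E" using ca_ug[OF bio, where 'i='i] ch all unfolding upward_generic_idx_def by blast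
  have U3: "?U \<in> REF E" using ref_ug[where 'i='i, of E] ch all unfolding upward_generic_idx_def by blast
  obtain r \<gamma>r where rs: "\<forall>\<delta>\<ge>\<gamma>r. r \<in> C \<delta> \<and> (\<forall>w\<in>C \<delta>. w \<noteq> r \<longrightarrow> descendant E r w)"
    using root_stable[OF bio ch] all by blast
  have "?U \<in> IAP E"
    unfolding IAP_def
  proof (intro CollectI notI)
    assume "\<exists>v\<in>?U. infinite {w \<in> ?U. descendant E v w} \<and> infinite {w \<in> ?U. \<not> descendant E v w}"
    then obtain v \<alpha>v where v: "v \<in> C \<alpha>v" and Dinf: "infinite {w \<in> ?U. descendant E v w}"
      and Ninf: "infinite {w \<in> ?U. \<not> descendant E v w}" by blast
    define g where "g = max \<gamma>r \<alpha>v"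
    have vg: "v \<in> C g" using v mo[of \<alpha>v g] unfolding g_def by auto
    have rg: "\<And>\<delta>. g \<le> \<delta> \<Longrightarrow> r \<in> C \<delta> \<and> (\<forall>w\<in>C \<delta>. w \<noteq> r \<longrightarrow> descendant E r w)"
      using rs unfolding g_def by auto
    have "infinite {w. descendant E v w}" using Dinf by (rule infinite_super[rotated]) blast
    then have Dg: "infinite {w \<in> C g. descendant E v w}" using ref[of g] vg unfolding REF_def by blast
    then have Ng: "finite {w \<in> C g. \<not> descendant E v w}" using iap[of g] vg unfolding IAP_def by blast
    have Cg: "infinite (C g)" using Dg by (rule infinite_super[rotated]) blast
    have M: "x \<in> C g" if "x \<in> C \<delta>" "infinite {w. descendant E x w}" for x \<delta>
    proof -
      define d where "d = max \<delta> g"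
      have xd: "x \<in> C d" using that mo[of \<delta> d] unfolding d_def by auto
      have "infinite {w \<in> C d. descendant E x w}" using ref[of d] xd that(2) unfolding REF_def by blast
      then have fn: "finite {w \<in> C d. \<not> descendant E x w}" using iap[of d] xd unfolding IAP_def by blast
      have gd: "C g \<subseteq> C d" using mo[of g d] unfolding d_def by auto
      have "\<exists>y\<in>C g. descendant E x y"
      proof (rule ccontr)
        assume "\<not> ?thesis"
        then have "C g \<subseteq> {w \<in> C d. \<not> descendant E x w}" using gd by blast
        then show False using fn Cg finite_subset by blast
      qed
      then obtain y where "y \<in> C g" "descendant E x y" by blast
      show "x \<in> C g"
      proof (cases "x = r")
        case True then show ?thesis using rg by auto
      next
        case False
        then have "descendant E r x" using rg[of d] xd unfolding d_def by auto
        then show ?thesis using conv[of g] rg[of g] \<open>y \<in> C g\<close> \<open>descendant E x y\<close>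
          unfolding CONV_def by blast
      qed
    qed
    define F where "F = (\<Union>x\<in>{w \<in> C g. \<not> descendant E v w}.
        \<Union>y\<in>{y. E x y \<and> finite {w. descendant E y w}}. insert y {w. descendant E y w})"
    have finF: "finite F" unfolding F_def
    proof (intro finite_UN_I Ng)
      fix x show "finite {y. E x y \<and> finite {w. descendant E y w}}"
        using bio unfolding infinite_biosphere_def by auto
    qed auto
    have "{w \<in> ?U. \<not> descendant E v w} \<subseteq> {w \<in> C g. \<not> descendant E v w} \<union> F"
    proof
      fix w assume w: "w \<in> {w \<in> ?U. \<not> descendant E v w}"
      show "w \<in> {w \<in> C g. \<not> descendant E v w} \<union> F"
      proof (cases "w \<in> C g")
        case True then show ?thesis using w by blast
      next
        case False
        from w obtain \<beta> where "w \<in> C \<beta>" and nd: "\<not> descendant E v w" by blast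
        define d where "d = max \<beta> g"
        have wd: "w \<in> C d" using \<open>w \<in> C \<beta>\<close> mo[of \<beta> d] unfolding d_def by auto
        have "w \<noteq> r" using False rg by auto
        then have "descendant E r w" using rg[of d] wd unfolding d_def by auto
        then obtain x y where xy: "x \<in> C g" "y \<notin> C g" "E x y" "x = r \<or> descendant E r x"
          "y = w \<or> descendant E y w"
          using path_exit[of E r w "C g"] False rg by blast
        have xw: "descendant E x w" using desc_edge[OF xy(3) xy(5)] .
        have xN: "\<not> descendant E v x" using nd xw desc_trans[of E v x w] by blast
        have xd: "x \<in> C d" using xy(1) mo[of g d] unfolding d_def by auto
        have yd: "y \<in> C d"
        proof (cases "y = w")
          case True then show ?thesis using wd by simp
        next
          case False
          then have "descendant E y w" using xy(5) by blast
          moreover have "descendant E x y" using xy(3) unfolding descendant_def by auto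
          ultimately show ?thesis using conv[of d] xd wd unfolding CONV_def by blast
        qed
        have "finite {w. descendant E y w}" using M[OF yd] xy(2) by blast
        moreover have "w \<in> insert y {w. descendant E y w}" using xy(5) by blast
        ultimately have "w \<in> F" unfolding F_def using xy(1,3) xN by blast
        then show ?thesis by blast
      qed
    qed
    then have "finite {w \<in> ?U. \<not> descendant E v w}" using Ng finF finite_subset by blast
    then show False using Ninf by blast
  qed
  then show "?U \<in> IAP E \<inter> CONV E \<inter> CA E \<inter> REF E" using U1 U2 U3 by blast
qed

theorem mainTheorem5:
  fixes E :: "'v \<Rightarrow> 'v \<Rightarrow> bool" and t :: "'v \<Rightarrow> real"
  assumes "infinite_biosphere E t"
  shows "upward_generic_idx TYPE('i::linorder) (CONV E)
         \<and> upward_generic_idx TYPE('i::linorder) (CA E)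
         \<and> upward_generic_idx TYPE('i::linorder) (REF E)
         \<and> upward_generic_idx TYPE('i::linorder) (IAP E \<inter> CONV E \<inter> CA E \<inter> REF E)"
  using conv_ug ca_ug[OF assms] ref_ug iap_ug[OF assms] by blast

end
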